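(* Let $G$ be a graph and $\{C_1,\dots,C_\ell\}$ a min-max clique covering of $G$ with simple intersection. If $S$ is a positive zero forcing set of $G$, then for all $i,j\in\{1,\dots,\ell\}$ the sets $(V(G)\setminus S)\cap C_{i,j}$ and $(V(G)\setminus S)\cap C_{i,i}$ each have size at most one.
   Context: A clique covering of a graph is a set of cliques such that every edge lies in at least one of them; $\operatorname{cc}(G)$ is its minimum size. A min-max clique covering is a clique covering of size $\operatorname{cc}(G)$ consisting of maximal cliques; it has simple intersection if no three distinct cliques of it share a vertex. $C_{i,j}=C_i\cap C_j$ for $i\ne j$ and $C_{i,i}=C_i\setminus\bigcup_{j\ne i}C_j$. Positive zero forcing: initially the vertices of $S$ are black and all others white; repeatedly, let $W_1,\dots,W_k$ be the vertex sets of components of $G$ minus the black vertices; a black vertex $u$ whose only white neighbour in the subgraph induced by $W_i\cup(\text{black vertices})$ is $w$ may turn $w$ black. $S$ is a positive zero forcing set if eventually all vertices become black. *)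

theory Defs
  imports Main
begin

definition graph :: "'a set \<Rightarrow> 'a set set \<Rightarrow> bool" where
  "graph V E \<longleftrightarrow> finite V \<and> (\<forall>e\<in>E. \<exists>u v. e = {u, v} \<and> u \<in> V \<and> v \<in> V \<and> u \<noteq> v)"

definition clique :: "'a set \<Rightarrow> 'a set set \<Rightarrow> 'a set \<Rightarrow> bool" where
  "clique V E C \<longleftrightarrow> C \<subseteq> V \<and> (\<forall>u\<in>C. \<forall>v\<in>C. u \<noteq> v \<longrightarrow> {u, v} \<in> E)"

definition maximal_clique :: "'a set \<Rightarrow> 'a set set \<Rightarrow> 'a set \<Rightarrow> bool" where
  "maximal_clique V E C \<longleftrightarrow> clique V E C \<and> (\<forall>D. clique V E D \<and> C \<subseteq> D \<longrightarrow> D = C)"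

definition clique_covering :: "'a set \<Rightarrow> 'a set set \<Rightarrow> 'a set set \<Rightarrow> bool" where
  "clique_covering V E \<C> \<longleftrightarrow> (\<forall>C\<in>\<C>. clique V E C) \<and> (\<forall>e\<in>E. \<exists>C\<in>\<C>. e \<subseteq> C)"

definition cc :: "'a set \<Rightarrow> 'a set set \<Rightarrow> nat" where
  "cc V E = (LEAST n. \<exists>\<C>. clique_covering V E \<C> \<and> finite \<C> \<and> card \<C> = n)"

definition min_max_clique_covering :: "'a set \<Rightarrow> 'a set set \<Rightarrow> 'a set set \<Rightarrow> bool" where
  "min_max_clique_covering V E \<C> \<longleftrightarrow>
     clique_covering V E \<C> \<and> finite \<C> \<and> card \<C> = cc V E \<and> (\<forall>C\<in>\<C>. maximal_clique V E C)"

definition simple_intersection :: "'a set set \<Rightarrow> bool" where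
  "simple_intersection \<C> \<longleftrightarrow>
     (\<forall>A\<in>\<C>. \<forall>B\<in>\<C>. \<forall>C\<in>\<C>. A \<noteq> B \<and> A \<noteq> C \<and> B \<noteq> C \<longrightarrow> A \<inter> B \<inter> C = {})"

text \<open>C_{i,j} = C_i \<inter> C_j (i \<noteq> j) and C_{i,i} = C_i minus the union of the others.\<close>
definition private_part :: "'a set set \<Rightarrow> 'a set \<Rightarrow> 'a set" where
  "private_part \<C> C = C - \<Union>(\<C> - {C})"

definition adj_in :: "'a set set \<Rightarrow> 'a set \<Rightarrow> 'a \<Rightarrow> 'a \<Rightarrow> bool" where
  "adj_in E X u v \<longleftrightarrow> u \<in> X \<and> v \<in> X \<and> {u, v} \<in> E"

definition component_of :: "'a set set \<Rightarrow> 'a set \<Rightarrow> 'a set \<Rightarrow> bool" where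
  "component_of E X W \<longleftrightarrow> (\<exists>x\<in>X. W = {y. (adj_in E X)\<^sup>*\<^sup>* x y})"

text \<open>Black sets reachable from S by positive zero forcing steps: for a component W
 of G minus the black vertices B, a black vertex u whose only white neighbour in
 G[W \<union> B] is w forces w.\<close>
inductive_set pzf_reach :: "'a set \<Rightarrow> 'a set set \<Rightarrow> 'a set \<Rightarrow> 'a set set"
  for V :: "'a set" and E :: "'a set set" and S :: "'a set" where
  start: "S \<in> pzf_reach V E S"
| force: "\<lbrakk>B \<in> pzf_reach V E S; component_of E (V - B) W; u \<in> B;
            {v \<in> W \<union> B. {u, v} \<in> E \<and> v \<notin> B} = {w}\<rbrakk>
          \<Longrightarrow> insert w B \<in> pzf_reach V E S"

definition positive_zero_forcing_set :: "'a set \<Rightarrow> 'a set set \<Rightarrow> 'a set \<Rightarrow> bool" where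
  "positive_zero_forcing_set V E S \<longleftrightarrow> S \<subseteq> V \<and> V \<in> pzf_reach V E S"

end

theory Submission
  imports Defs
begin

lemma step_ok:
  assumes "component_of E (V - B) W" "u \<in> B"
    "{v \<in> W \<union> B. {u, v} \<in> E \<and> v \<notin> B} = {w}"
    "a \<notin> B" "b \<notin> B" "a \<noteq> b" "a \<in> V" "b \<in> V" "{a,b} \<in> E"
    "\<And>u. {u,a} \<in> E \<Longrightarrow> u \<noteq> b \<Longrightarrow> {u,b} \<in> E"
  shows "w \<noteq> a"
proof
  assume wa: "w = a"
  have aW: "a \<in> W" using assms(3,4) wa by blast
  obtain x0 where W: "W = {y. (adj_in E (V - B))\<^sup>*\<^sup>* x0 y}" using assms(1) unfolding component_of_def by blast
  have "adj_in E (V - B) a b" using assms unfolding adj_in_def by auto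
  hence bW: "b \<in> W" using aW W by (auto intro: rtranclp.rtrancl_into_rtrancl)
  have "{u,a} \<in> E" using assms(3) wa by blast
  moreover have "u \<noteq> b" using assms(2,5) by blast
  ultimately have "{u,b} \<in> E" using assms(10) by blast
  hence "b \<in> {w}" using assms(3,5) bW by blast
  thus False using wa assms(6) by simp
qed

lemma twins_white:
  assumes "B \<in> pzf_reach V E S" "x \<notin> S" "y \<notin> S" "x \<noteq> y" "x \<in> V" "y \<in> V" "{x,y} \<in> E"
    "\<And>u. {u,x} \<in> E \<Longrightarrow> u \<noteq> y \<Longrightarrow> {u,y} \<in> E"
    "\<And>u. {u,y} \<in> E \<Longrightarrow> u \<noteq> x \<Longrightarrow> {u,x} \<in> E"
  shows "x \<notin> B \<and> y \<notin> B"
  using assms(1)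
proof induction
  case start then show ?case using assms by auto
next
  case (force B W u w)
  have "w \<noteq> x" by (rule step_ok[OF force(2,3,4), where a=x and b=y]) (use force(5) assms in auto)
  moreover have "w \<noteq> y" by (rule step_ok[OF force(2,3,4), where a=y and b=x]) (use force(5) assms in \<open>auto simp: insert_commute\<close>)
  ultimately show ?case using force(5) by auto
qed

lemma card_le1:
  assumes "\<And>x y. x \<in> X \<Longrightarrow> y \<in> X \<Longrightarrow> x \<noteq> y \<Longrightarrow> False"
  shows "card X \<le> 1"
proof (cases "finite X")
  case True then show ?thesis using assms by (metis One_nat_def card_le_Suc0_iff_eq)
qed simp

lemma no_twins:
  assumes "positive_zero_forcing_set V E S" "x \<in> V - S" "y \<in> V - S" "x \<noteq> y"
    "{x,y} \<in> E"
    "\<And>u. {u,x} \<in> E \<Longrightarrow> u \<noteq> y \<Longrightarrow> {u,y} \<in> E"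
    "\<And>u. {u,y} \<in> E \<Longrightarrow> u \<noteq> x \<Longrightarrow> {u,x} \<in> E"
  shows False
proof -
  have "V \<in> pzf_reach V E S" using assms(1) unfolding positive_zero_forcing_set_def by blast
  from twins_white[OF this] assms show False by auto
qed

theorem mainTheorem13:
  fixes V :: "'a set" and E :: "'a set set" and \<C> :: "'a set set" and S :: "'a set"
  assumes "graph V E"
    and "min_max_clique_covering V E \<C>"
    and "simple_intersection \<C>"
    and "positive_zero_forcing_set V E S"
  shows "(\<forall>A\<in>\<C>. \<forall>B\<in>\<C>. A \<noteq> B \<longrightarrow> card ((V - S) \<inter> (A \<inter> B)) \<le> 1)
       \<and> (\<forall>A\<in>\<C>. card ((V - S) \<inter> private_part \<C> A) \<le> 1)"
proof -
  have cov: "\<And>e. e \<in> E \<Longrightarrow> \<exists>D\<in>\<C>. e \<subseteq> D" and cl: "\<And>C. C \<in> \<C> \<Longrightarrow> clique V E C"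
    using assms(2) unfolding min_max_clique_covering_def clique_covering_def by auto
  have si: "\<And>A B C. A \<in> \<C> \<Longrightarrow> B \<in> \<C> \<Longrightarrow> C \<in> \<C> \<Longrightarrow> A \<noteq> B \<Longrightarrow> A \<noteq> C \<Longrightarrow> B \<noteq> C \<Longrightarrow> A \<inter> B \<inter> C = {}"
    using assms(3) unfolding simple_intersection_def by blast
  have cle: "\<And>C a b. C \<in> \<C> \<Longrightarrow> a \<in> C \<Longrightarrow> b \<in> C \<Longrightarrow> a \<noteq> b \<Longrightarrow> {a,b} \<in> E"
    using cl unfolding clique_def by blast
  have part1: "card ((V - S) \<inter> (A \<inter> B)) \<le> 1" if AB: "A \<in> \<C>" "B \<in> \<C>" "A \<noteq> B" for A B
  proof (rule card_le1)
    fix x y assume xy: "x \<in> (V - S) \<inter> (A \<inter> B)" "y \<in> (V - S) \<inter> (A \<inter> B)" "x \<noteq> y"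
    have tw: "{u,b} \<in> E" if h: "{u,a} \<in> E" "u \<noteq> b" "a \<in> A \<inter> B" "b \<in> A \<inter> B" for u a b
    proof -
      obtain D where D: "D \<in> \<C>" "{u,a} \<subseteq> D" using cov h(1) by blast
      have "D = A \<or> D = B" using si[OF AB(1,2) D(1) AB(3)] D h(3) by blast
      then show ?thesis using cle[of D u b] D h by auto
    qed
    show False
      by (rule no_twins[OF assms(4), of x y]) (use xy cle AB tw in \<open>auto\<close>)
  qed
  have part2: "card ((V - S) \<inter> private_part \<C> A) \<le> 1" if A: "A \<in> \<C>" for A
  proof (rule card_le1)
    fix x y assume xy: "x \<in> (V - S) \<inter> private_part \<C> A" "y \<in> (V - S) \<inter> private_part \<C> A" "x \<noteq> y"
    have tw: "{u,b} \<in> E" if h: "{u,a} \<in> E" "u \<noteq> b" "a \<in> private_part \<C> A" "b \<in> private_part \<C> A" for u a b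
    proof -
      obtain D where D: "D \<in> \<C>" "{u,a} \<subseteq> D" using cov h(1) by blast
      have "D = A" using D h(3) unfolding private_part_def by blast
      then show ?thesis using cle[of D u b] D h unfolding private_part_def by auto
    qed
    show False
      by (rule no_twins[OF assms(4), of x y]) (use xy cle A tw in \<open>auto simp: private_part_def\<close>)
  qed
  show ?thesis using part1 part2 by blast
qed

end
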